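(* Let $G$ be a map graph with a corresponding planar bipartite graph $B$, let $k$ be a positive integer, let $\mathcal{D}=(T,\beta_{\mathcal{D}})$ be a nice tree decomposition of $B$ of width less than $5\sqrt{2k}$, and let $\mathcal{D}'=(T,\beta_{\mathcal{D}'})$ be the tree decomposition of $G$ derived from $\mathcal{D}$. Let $C$ be a cycle in $G$ and let $K$ be a special clique of $G$. Then there is a cycle $C'$ in $G$ of the same length as $C$ such that $E(C')\setminus E(K)=E(C)\setminus E(K)$ and, for every node $t\in V(T)$, the number of edges of $E(C')\cap E(K)$ with one endpoint in $\mathsf{Fake}(t)\cap K$ and the other in $V(G)\setminus\gamma_{\mathcal{D}'}(t)$ is at most $4$.
   Context: All graphs are finite and simple; $E(K)$ denotes the set of edges of $G$ with both endpoints in $K$. For a bipartite graph $B$ with bipartition $V(B)=W\uplus U$, the half-square of $B$ is the graph on $W$ in which two vertices are adjacent iff they are at distance exactly $2$ in $B$. A graph $G$ is a map graph iff it is the half-square of some planar bipartite graph $B$; such $B$ (with $W=V(G)$) is a corresponding planar bipartite graph, and $S(G)=U$ is the set of special vertices; for $s\in S(G)$, $N_B(s)$ is a clique of $G$ called a special clique. A tree decomposition $(T,\beta)$: rooted tree, bags covering all vertices and edges, each vertex's nodes inducing a connected subtree; width is max bag size minus one. $\gamma_{\mathcal{D}}(t)$ (resp. $\gamma_{\mathcal{D}'}(t)$) is the union of bags at $t$ and its descendants. A nice tree decomposition has empty root bag and leaf, introduce, forget and join nodes in the standard sense. The derived decomposition has the same tree and bags $\beta_{\mathcal{D}'}(t)=(\beta_{\mathcal{D}}(t)\cap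 V(G))\cup\bigcup_{s\in\beta_{\mathcal{D}}(t)\cap S(G)}(N_B(s)\cap\gamma_{\mathcal{D}}(t))$, and $\mathsf{Fake}(t)=\beta_{\mathcal{D}'}(t)\setminus\beta_{\mathcal{D}}(t)$. *)

theory Defs
  imports "HOL-Analysis.Analysis"
begin

definition nbhd :: "'v set set \<Rightarrow> 'v \<Rightarrow> 'v set" where
  "nbhd E x = {y. {x, y} \<in> E}"

definition edges_within :: "'v set set \<Rightarrow> 'v set \<Rightarrow> 'v set set" where
  "edges_within E K = {e \<in> E. e \<subseteq> K}"

definition is_cycle :: "'v set \<Rightarrow> 'v set set \<Rightarrow> 'v list \<Rightarrow> bool" where
  "is_cycle V E cs \<longleftrightarrow> length cs \<ge> 3 \<and> distinct cs \<and> set cs \<subseteq> V \<and>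
     (\<forall>i < length cs. {cs ! i, cs ! ((i + 1) mod length cs)} \<in> E)"

definition cycle_edges :: "'v list \<Rightarrow> 'v set set" where
  "cycle_edges cs = {{cs ! i, cs ! ((i + 1) mod length cs)} | i. i < length cs}"

text \<open>The length of a cycle is its number of edges (= number of vertices).\<close>
definition cycle_length :: "'v list \<Rightarrow> nat" where
  "cycle_length cs = length cs"

definition bipartite_graph :: "'v set \<Rightarrow> 'v set \<Rightarrow> 'v set set \<Rightarrow> bool" where
  "bipartite_graph W U EB \<longleftrightarrow> finite W \<and> finite U \<and> W \<inter> U = {} \<and>
     EB \<subseteq> {{w, u} | w u. w \<in> W \<and> u \<in> U}"

text \<open>Planarity: a drawing in the plane (identified with \<complex>), vertices as distinct points,
  edges as arcs joining their endpoints, not passing through other vertices, and two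
  distinct arcs meet only in common endpoints.\<close>
definition planar_graph :: "'v set \<Rightarrow> 'v set set \<Rightarrow> bool" where
  "planar_graph V E \<longleftrightarrow>
     (\<exists>(pos :: 'v \<Rightarrow> complex) (crv :: 'v set \<Rightarrow> real \<Rightarrow> complex).
        inj_on pos V \<and>
        (\<forall>e \<in> E. \<exists>a b. e = {a, b} \<and> a \<in> V \<and> b \<in> V \<and> arc (crv e) \<and>
            pathstart (crv e) = pos a \<and> pathfinish (crv e) = pos b \<and>
            path_image (crv e) \<inter> pos ` V = {pos a, pos b}) \<and>
        (\<forall>e \<in> E. \<forall>e' \<in> E. e \<noteq> e' \<longrightarrow>
            path_image (crv e) \<inter> path_image (crv e') \<subseteq> pos ` (e \<inter> e')))"

text \<open>Half-square of B on W: two vertices of W adjacent iff at distance exactly 2 in B,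
  i.e. distinct, non-adjacent in B, and with a common neighbour in B.\<close>
definition half_square_edges :: "'v set \<Rightarrow> 'v set set \<Rightarrow> 'v set set" where
  "half_square_edges W EB =
     {{w, w'} | w w'. w \<in> W \<and> w' \<in> W \<and> w \<noteq> w' \<and> {w, w'} \<notin> EB \<and>
                     (\<exists>s. {w, s} \<in> EB \<and> {s, w'} \<in> EB)}"

definition rooted_tree :: "'n set \<Rightarrow> 'n \<Rightarrow> ('n \<Rightarrow> 'n) \<Rightarrow> bool" where
  "rooted_tree N r par \<longleftrightarrow> finite N \<and> r \<in> N \<and> par r = r \<and>
     (\<forall>t \<in> N. par t \<in> N \<and> (\<exists>k. (par ^^ k) t = r))"

definition tree_edges :: "'n set \<Rightarrow> 'n \<Rightarrow> ('n \<Rightarrow> 'n) \<Rightarrow> 'n set set" where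
  "tree_edges N r par = {{t, par t} | t. t \<in> N \<and> t \<noteq> r}"

definition children :: "'n set \<Rightarrow> 'n \<Rightarrow> ('n \<Rightarrow> 'n) \<Rightarrow> 'n \<Rightarrow> 'n set" where
  "children N r par t = {c \<in> N. c \<noteq> r \<and> par c = t}"

definition descendants :: "'n set \<Rightarrow> ('n \<Rightarrow> 'n) \<Rightarrow> 'n \<Rightarrow> 'n set" where
  "descendants N par t = {s \<in> N. \<exists>k. (par ^^ k) s = t}"

definition walk :: "'a set set \<Rightarrow> 'a list \<Rightarrow> bool" where
  "walk E xs \<longleftrightarrow> (\<forall>i. Suc i < length xs \<longrightarrow> {xs ! i, xs ! Suc i} \<in> E)"

definition connected_in :: "'a set set \<Rightarrow> 'a set \<Rightarrow> bool" where
  "connected_in E X \<longleftrightarrow> (\<forall>a \<in> X. \<forall>b \<in> X. \<exists>xs. xs \<noteq> [] \<and> hd xs = a \<and> last xs = b \<and>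
                                        set xs \<subseteq> X \<and> walk E xs)"

definition tree_decomposition ::
  "'v set \<Rightarrow> 'v set set \<Rightarrow> 'n set \<Rightarrow> 'n \<Rightarrow> ('n \<Rightarrow> 'n) \<Rightarrow> ('n \<Rightarrow> 'v set) \<Rightarrow> bool" where
  "tree_decomposition V E N r par bag \<longleftrightarrow>
     rooted_tree N r par \<and>
     (\<forall>t \<in> N. bag t \<subseteq> V) \<and>
     (\<forall>v \<in> V. \<exists>t \<in> N. v \<in> bag t) \<and>
     (\<forall>e \<in> E. \<exists>t \<in> N. e \<subseteq> bag t) \<and>
     (\<forall>v \<in> V. connected_in (tree_edges N r par) {t \<in> N. v \<in> bag t})"

definition td_width :: "'n set \<Rightarrow> ('n \<Rightarrow> 'v set) \<Rightarrow> real" where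
  "td_width N bag = real (Max ((\<lambda>t. card (bag t)) ` N)) - 1"

text \<open>Nice tree decomposition (convention of Cygan et al.): empty root bag, and every node is
  a leaf (no children, empty bag), an introduce node, a forget node, or a join node.\<close>
definition nice_tree_decomposition ::
  "'v set \<Rightarrow> 'v set set \<Rightarrow> 'n set \<Rightarrow> 'n \<Rightarrow> ('n \<Rightarrow> 'n) \<Rightarrow> ('n \<Rightarrow> 'v set) \<Rightarrow> bool" where
  "nice_tree_decomposition V E N r par bag \<longleftrightarrow>
     tree_decomposition V E N r par bag \<and> bag r = {} \<and>
     (\<forall>t \<in> N.
        (children N r par t = {} \<and> bag t = {}) \<or>
        (\<exists>c v. children N r par t = {c} \<and> v \<notin> bag c \<and> bag t = insert v (bag c)) \<or>
        (\<exists>c v. children N r par t = {c} \<and> v \<in> bag c \<and> bag t = bag c - {v}) \<or>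
        (\<exists>c1 c2. c1 \<noteq> c2 \<and> children N r par t = {c1, c2} \<and> bag t = bag c1 \<and> bag t = bag c2))"

definition gamma :: "'n set \<Rightarrow> ('n \<Rightarrow> 'n) \<Rightarrow> ('n \<Rightarrow> 'v set) \<Rightarrow> 'n \<Rightarrow> 'v set" where
  "gamma N par bag t = (\<Union>s \<in> descendants N par t. bag s)"

text \<open>Bags of the derived decomposition D' (W = V(G), U = S(G)).\<close>
definition derived_bag ::
  "'v set \<Rightarrow> 'v set \<Rightarrow> 'v set set \<Rightarrow> 'n set \<Rightarrow> ('n \<Rightarrow> 'n) \<Rightarrow> ('n \<Rightarrow> 'v set) \<Rightarrow> 'n \<Rightarrow> 'v set" where
  "derived_bag W U EB N par bag t =
     (bag t \<inter> W) \<union> (\<Union>s \<in> bag t \<inter> U. nbhd EB s \<inter> gamma N par bag t)"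

definition Fake ::
  "'v set \<Rightarrow> 'v set \<Rightarrow> 'v set set \<Rightarrow> 'n set \<Rightarrow> ('n \<Rightarrow> 'n) \<Rightarrow> ('n \<Rightarrow> 'v set) \<Rightarrow> 'n \<Rightarrow> 'v set" where
  "Fake W U EB N par bag t = derived_bag W U EB N par bag t - bag t"

end

theory Submission
  imports Defs
begin

fun adj :: "'a list \<Rightarrow> 'a set set" where
  "adj (x # y # zs) = insert {x, y} (adj (y # zs))"
| "adj _ = {}"

lemma adj_nth: "adj xs = {{xs ! i, xs ! Suc i} | i. Suc i < length xs}"
proof (induction xs rule: adj.induct)
  case (1 x y zs)
  have "{{(x # y # zs) ! i, (x # y # zs) ! Suc i} | i. Suc i < length (x # y # zs)}
      = insert {x, y} {{(y # zs) ! i, (y # zs) ! Suc i} | i. Suc i < length (y # zs)}"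
    (is "?L = ?R")
  proof
    show "?L \<subseteq> ?R"
    proof
      fix e assume "e \<in> ?L"
      then obtain i where i: "e = {(x # y # zs) ! i, (x # y # zs) ! Suc i}" "Suc i < length (x # y # zs)" by blast
      show "e \<in> ?R"
      proof (cases i)
        case 0 then show ?thesis using i by simp
      next
        case (Suc j) then show ?thesis using i by auto
      qed
    qed
    show "?R \<subseteq> ?L"
    proof
      fix e assume "e \<in> ?R"
      then consider "e = {x, y}" | j where "e = {(y # zs) ! j, (y # zs) ! Suc j}" "Suc j < length (y # zs)" by blast
      then show "e \<in> ?L"
      proof cases
        case 1 then show ?thesis by (rule_tac CollectI, rule_tac x=0 in exI) auto
      next
        case 2 then show ?thesis by (rule_tac CollectI, rule_tac x="Suc j" in exI) auto
      qed
    qed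
  qed
  then show ?case using 1 by simp
qed auto

lemma adj_subset: "e \<in> adj xs \<Longrightarrow> e \<subseteq> set xs"
  by (induction xs rule: adj.induct) auto

lemma adj_Cons: "ys \<noteq> [] \<Longrightarrow> adj (x # ys) = insert {x, hd ys} (adj ys)"
  by (cases ys) auto

lemma adj_append: "xs \<noteq> [] \<Longrightarrow> ys \<noteq> [] \<Longrightarrow> adj (xs @ ys) = adj xs \<union> adj ys \<union> {{last xs, hd ys}}"
proof (induction xs rule: adj.induct)
  case (1 x y zs)
  then show ?case by (simp add: adj_Cons) blast
next
  case ("2_2" v)
  then show ?case by (simp add: adj_Cons insert_commute)
qed auto

lemma adj_rev: "adj (rev xs) = adj xs"
proof (induction xs)
  case (Cons x xs)
  show ?case
  proof (cases "xs = []")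
    case True then show ?thesis by simp
  next
    case False
    then have "adj (rev (x # xs)) = adj (rev xs) \<union> adj [x] \<union> {{last (rev xs), x}}"
      by (simp add: adj_append)
    then show ?thesis using False Cons by (simp add: adj_Cons last_rev insert_commute)
  qed
qed simp

lemma cycle_edges_adj:
  assumes "xs \<noteq> []"
  shows "cycle_edges xs = insert {last xs, hd xs} (adj xs)"
proof -
  let ?n = "length xs"
  have "cycle_edges xs = {{xs ! i, xs ! ((i + 1) mod ?n)} | i. i < ?n}" by (simp add: cycle_edges_def)
  also have "\<dots> = insert {xs ! (?n - 1), xs ! 0} {{xs ! i, xs ! Suc i} | i. Suc i < ?n}" (is "?L = ?R")
  proof
    show "?L \<subseteq> ?R"
    proof
      fix e assume "e \<in> ?L"
      then obtain i where i: "e = {xs ! i, xs ! ((i + 1) mod ?n)}" "i < ?n" by blast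
      show "e \<in> ?R"
      proof (cases "Suc i < ?n")
        case True then show ?thesis using i by auto
      next
        case False then have "i = ?n - 1" using i by auto
        moreover have "(i + 1) mod ?n = 0" using False i
          by (metis Suc_eq_plus1 Suc_lessI mod_self)
        ultimately show ?thesis using i by simp
      qed
    qed
    show "?R \<subseteq> ?L"
    proof
      fix e assume "e \<in> ?R"
      then consider "e = {xs ! (?n - 1), xs ! 0}" | j where "e = {xs ! j, xs ! Suc j}" "Suc j < ?n" by blast
      then show "e \<in> ?L"
      proof cases
        case 1 then show ?thesis using assms
          by (rule_tac CollectI, rule_tac x="?n - 1" in exI) auto
      next
        case 2 then show ?thesis by (rule_tac CollectI, rule_tac x="j" in exI) auto
      qed
    qed
  qed
  finally show ?thesis using assms by (simp add: adj_nth last_conv_nth hd_conv_nth)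
qed

lemma cycle_edges_rotate1: "cycle_edges (rotate1 xs) = cycle_edges xs"
proof (cases xs)
  case (Cons x ys)
  show ?thesis
  proof (cases "ys = []")
    case False
    then show ?thesis using Cons
      by (simp add: cycle_edges_adj adj_append adj_Cons insert_commute)
  qed (simp add: Cons)
qed simp

lemma cycle_edges_rotate: "cycle_edges (rotate n xs) = cycle_edges xs"
  by (induction n) (simp_all add: cycle_edges_rotate1)

lemma is_cycle_alt: "is_cycle V E cs \<longleftrightarrow> 3 \<le> length cs \<and> distinct cs \<and> set cs \<subseteq> V \<and> cycle_edges cs \<subseteq> E"
  unfolding is_cycle_def cycle_edges_def by blast


lemma swap_edges:
  assumes d: "distinct (a # S @ Q)" and S: "S \<noteq> []" and Q: "Q \<noteq> []"
  defines "R \<equiv> adj S \<union> adj Q \<union> {{last Q, a}}"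
  shows "cycle_edges (a # S @ Q) = insert {a, hd S} (insert {last S, hd Q} R)"
    and "cycle_edges (a # rev S @ Q) = insert {a, last S} (insert {hd S, hd Q} R)"
    and "{a, hd S} \<notin> R" and "{last S, hd Q} \<notin> R" and "{a, hd S} \<noteq> {last S, hd Q}"
proof -
  show "cycle_edges (a # S @ Q) = insert {a, hd S} (insert {last S, hd Q} R)"
    using S Q by (simp add: cycle_edges_adj adj_Cons adj_append R_def) blast
  show "cycle_edges (a # rev S @ Q) = insert {a, last S} (insert {hd S, hd Q} R)"
    using S Q by (simp add: cycle_edges_adj adj_Cons adj_append R_def adj_rev hd_rev last_rev) blast
  have hS: "hd S \<in> set S" "last S \<in> set S" using S by auto
  have hQ: "hd Q \<in> set Q" "last Q \<in> set Q" using Q by auto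
  have aS: "a \<notin> set S" "a \<notin> set Q" "set S \<inter> set Q = {}" using d by auto
  show "{a, hd S} \<notin> R"
  proof
    assume "{a, hd S} \<in> R"
    then consider "{a, hd S} \<in> adj S" | "{a, hd S} \<in> adj Q" | "{a, hd S} = {last Q, a}"
      unfolding R_def by blast
    then show False
    proof cases
      case 1 then show ?thesis using adj_subset aS by fastforce
    next
      case 2 then show ?thesis using adj_subset aS by fastforce
    next
      case 3 then have "hd S = last Q \<or> hd S = a" by (auto simp: doubleton_eq_iff)
      then show ?thesis using hS hQ aS by auto
    qed
  qed
  show "{last S, hd Q} \<notin> R"
  proof
    assume "{last S, hd Q} \<in> R"
    then consider "{last S, hd Q} \<in> adj S" | "{last S, hd Q} \<in> adj Q" | "{last S, hd Q} = {last Q, a}"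
      unfolding R_def by blast
    then show False
    proof cases
      case 1 then show ?thesis using adj_subset aS hS hQ by fastforce
    next
      case 2 then show ?thesis using adj_subset aS hS hQ by fastforce
    next
      case 3 then have "last S = last Q \<or> last S = a" by (auto simp: doubleton_eq_iff)
      then show ?thesis using hS hQ aS by auto
    qed
  qed
  show "{a, hd S} \<noteq> {last S, hd Q}"
    using hS hQ aS by (auto simp: doubleton_eq_iff)
qed

definition cr :: "'v set \<Rightarrow> 'v set set \<Rightarrow> 'v set set" where
  "cr A E = {e \<in> E. \<exists>x y. e = {x, y} \<and> x \<in> A \<and> y \<notin> A}"

lemma crosses_doubleton: "(\<exists>x y. {u, v} = {x, y} \<and> x \<in> A \<and> y \<notin> A) \<longleftrightarrow> (u \<in> A \<longleftrightarrow> v \<notin> A)"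
  by (auto simp: doubleton_eq_iff)

lemma cr_insert2:
  "cr A (insert {u, v} E) = (if (u \<in> A \<longleftrightarrow> v \<notin> A) then insert {u, v} (cr A E) else cr A E)"
  unfolding cr_def using crosses_doubleton[of u v A] by auto

lemma card_cr_exact:
  assumes "finite Y" "{a, b} \<notin> Y" "{c, d} \<notin> Y" "{a, b} \<noteq> {c, d}"
  shows "card (cr A (insert {a, b} (insert {c, d} Y))) =
     card (cr A Y) + of_bool (a \<in> A \<longleftrightarrow> b \<notin> A) + of_bool (c \<in> A \<longleftrightarrow> d \<notin> A)"
proof -
  have f: "finite (cr A Y)" using assms(1) by (simp add: cr_def)
  have n: "{a, b} \<notin> cr A Y" "{c, d} \<notin> cr A Y" using assms by (auto simp: cr_def)
  show ?thesis using f n assms(4) by (simp add: cr_insert2)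
qed

lemma card_cr_le:
  assumes "finite Y"
  shows "card (cr A (insert {a, b} (insert {c, d} Y))) \<le>
     card (cr A Y) + of_bool (a \<in> A \<longleftrightarrow> b \<notin> A) + of_bool (c \<in> A \<longleftrightarrow> d \<notin> A)"
proof -
  have f: "finite (cr A Y)" using assms(1) by (simp add: cr_def)
  have "card (insert x Z) \<le> card Z + 1" if "finite Z" for x and Z :: "'a set set"
    using that by (simp add: card_insert_if)
  then show ?thesis using f by (simp add: cr_insert2 card_insert_if)
qed

lemma four_points:
  assumes "(pa::bool) = pc \<or> pb = pd"
  shows "of_bool (pa \<longleftrightarrow> \<not> pc) + of_bool (pb \<longleftrightarrow> \<not> pd) \<le>
         (of_bool (pa \<longleftrightarrow> \<not> pb) + of_bool (pc \<longleftrightarrow> \<not> pd) :: nat)"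
  using assms by (cases pa; cases pb; cases pc; cases pd) auto


lemma two_opt_step:
  assumes d: "distinct (a # S @ Q)" and S: "S \<noteq> []" and Q: "Q \<noteq> []"
    and side: "(a \<in> A \<and> last S \<in> A \<and> hd S \<notin> A \<and> hd Q \<notin> A) \<or>
               (a \<notin> A \<and> last S \<notin> A \<and> hd S \<in> A \<and> hd Q \<in> A)"
    and e1: "{a, hd S} \<in> edges_within EG K" and e2: "{last S, hd Q} \<in> edges_within EG K"
    and clique: "\<forall>x\<in>K. \<forall>y\<in>K. x \<noteq> y \<longrightarrow> {x, y} \<in> EG"
    and finF: "finite F" and AF: "A \<in> F"
    and lam: "\<forall>A'\<in>F. A' \<subseteq> A \<or> A \<subseteq> A' \<or> A' \<inter> A = {}"
  shows "cycle_edges (a # rev S @ Q) - edges_within EG K = cycle_edges (a # S @ Q) - edges_within EG K"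
    and "cycle_edges (a # rev S @ Q) \<subseteq> cycle_edges (a # S @ Q) \<union> edges_within EG K"
    and "(\<Sum>A'\<in>F. card (cr A' (cycle_edges (a # rev S @ Q) \<inter> edges_within EG K)))
       < (\<Sum>A'\<in>F. card (cr A' (cycle_edges (a # S @ Q) \<inter> edges_within EG K)))"
proof -
  define EK where "EK = edges_within EG K"
  define R where "R = adj S \<union> adj Q \<union> {{last Q, a}}"
  define b where "b = hd S"
  define c where "c = last S"
  define dd where "dd = hd Q"
  note sw = swap_edges[OF d S Q, folded R_def b_def c_def dd_def]
  have hS: "b \<in> set S" "c \<in> set S" using S by (auto simp: b_def c_def)
  have hQ: "dd \<in> set Q" using Q by (auto simp: dd_def)
  have aS: "a \<notin> set S" "a \<notin> set Q" "set S \<inter> set Q = {}" using d by auto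
  have K4: "a \<in> K" "b \<in> K" "c \<in> K" "dd \<in> K"
    using e1 e2 by (auto simp: edges_within_def b_def c_def dd_def)
  have ac: "a \<noteq> c" using aS hS by auto
  have bd: "b \<noteq> dd" using aS hS hQ by auto
  have n1: "{a, c} \<in> EK" "{b, dd} \<in> EK"
    using clique K4 ac bd by (auto simp: EK_def edges_within_def)
  have o1: "{a, b} \<in> EK" "{c, dd} \<in> EK" using e1 e2 by (auto simp: EK_def b_def c_def dd_def)
  have old: "cycle_edges (a # S @ Q) = insert {a, b} (insert {c, dd} R)" using sw(1) .
  have new: "cycle_edges (a # rev S @ Q) = insert {a, c} (insert {b, dd} R)" using sw(2) .
  show "cycle_edges (a # rev S @ Q) - edges_within EG K = cycle_edges (a # S @ Q) - edges_within EG K"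
    using old new n1 o1 unfolding EK_def by auto
  show "cycle_edges (a # rev S @ Q) \<subseteq> cycle_edges (a # S @ Q) \<union> edges_within EG K"
    using old new n1 unfolding EK_def by auto
  have finR: "finite (R \<inter> EK)" unfolding R_def
    by (metis finite_Int List.finite_set adj_subset finite_UnI finite_insert finite_Pow_iff
        finite_subset subsetI PowI empty_iff insert_is_Un)
  have oldK: "cycle_edges (a # S @ Q) \<inter> EK = insert {a, b} (insert {c, dd} (R \<inter> EK))"
    using old o1 by auto
  have newK: "cycle_edges (a # rev S @ Q) \<inter> EK = insert {a, c} (insert {b, dd} (R \<inter> EK))"
    using new n1 by auto
  have nR: "{a, b} \<notin> R \<inter> EK" "{c, dd} \<notin> R \<inter> EK" "{a, b} \<noteq> {c, dd}"
    using sw(3,4,5) by auto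
  have le: "card (cr A' (cycle_edges (a # rev S @ Q) \<inter> EK)) \<le> card (cr A' (cycle_edges (a # S @ Q) \<inter> EK))"
    if "A' \<in> F" for A'
  proof -
    have "(a \<in> A') = (c \<in> A') \<or> (b \<in> A') = (dd \<in> A')"
      using lam that side unfolding b_def c_def dd_def by blast
    then have fp: "of_bool (a \<in> A' \<longleftrightarrow> c \<notin> A') + of_bool (b \<in> A' \<longleftrightarrow> dd \<notin> A') \<le>
         (of_bool (a \<in> A' \<longleftrightarrow> b \<notin> A') + of_bool (c \<in> A' \<longleftrightarrow> dd \<notin> A') :: nat)"
      by (rule four_points)
    show ?thesis unfolding newK oldK
      using card_cr_le[OF finR, of A' a c b dd] card_cr_exact[OF finR nR, of A'] fp by linarith
  qed
  have lt: "card (cr A (cycle_edges (a # rev S @ Q) \<inter> EK)) < card (cr A (cycle_edges (a # S @ Q) \<inter> EK))"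
  proof -
    have s: "(a \<in> A \<longleftrightarrow> c \<in> A) \<and> (b \<in> A \<longleftrightarrow> dd \<in> A) \<and> (a \<in> A \<longleftrightarrow> b \<notin> A) \<and> (c \<in> A \<longleftrightarrow> dd \<notin> A)"
      using side unfolding b_def c_def dd_def by blast
    show ?thesis unfolding newK oldK
      using card_cr_le[OF finR, of A a c b dd] card_cr_exact[OF finR nR, of A] s by simp
  qed
  show "(\<Sum>A'\<in>F. card (cr A' (cycle_edges (a # rev S @ Q) \<inter> edges_within EG K)))
       < (\<Sum>A'\<in>F. card (cr A' (cycle_edges (a # S @ Q) \<inter> edges_within EG K)))"
    using sum_strict_mono_ex1[OF finF, of "\<lambda>A'. card (cr A' (cycle_edges (a # rev S @ Q) \<inter> EK))"
        "\<lambda>A'. card (cr A' (cycle_edges (a # S @ Q) \<inter> EK))"] le lt AF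
    unfolding EK_def by blast
qed


lemma find_split:
  assumes dcs: "distinct cs" and len: "3 \<le> length cs"
    and big: "3 \<le> card (cr A (cycle_edges cs \<inter> EK))"
  shows "\<exists>a S Q. cycle_edges (a # S @ Q) = cycle_edges cs \<and> set (a # S @ Q) = set cs \<and>
     length (a # S @ Q) = length cs \<and> distinct (a # S @ Q) \<and> S \<noteq> [] \<and> Q \<noteq> [] \<and>
     ((a \<in> A \<and> last S \<in> A \<and> hd S \<notin> A \<and> hd Q \<notin> A) \<or>
      (a \<notin> A \<and> last S \<notin> A \<and> hd S \<in> A \<and> hd Q \<in> A)) \<and>
     {a, hd S} \<in> EK \<and> {last S, hd Q} \<in> EK"
proof -
  define n where "n = length cs"
  define f where "f i = {cs ! i, cs ! ((i + 1) mod n)}" for i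
  define I where "I = {i. i < n \<and> f i \<in> EK \<and> (cs ! i \<in> A \<longleftrightarrow> cs ! ((i + 1) mod n) \<notin> A)}"
  have "cr A (cycle_edges cs \<inter> EK) \<subseteq> f ` I"
  proof
    fix e assume "e \<in> cr A (cycle_edges cs \<inter> EK)"
    then have e1: "e \<in> cycle_edges cs" "e \<in> EK" "\<exists>x y. e = {x, y} \<and> x \<in> A \<and> y \<notin> A"
      by (simp_all add: cr_def)
    have "\<exists>i. e = f i \<and> i < n" using e1(1) unfolding cycle_edges_def f_def n_def by simp
    then obtain i where i: "i < n" "e = f i" by blast
    have "(cs ! i \<in> A \<longleftrightarrow> cs ! ((i + 1) mod n) \<notin> A)"
      using e1(3) crosses_doubleton[of "cs ! i" "cs ! ((i + 1) mod n)" A] i(2) unfolding f_def by simp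
    then have "i \<in> I" using i e1(2) unfolding I_def by simp
    then show "e \<in> f ` I" using i(2) by simp
  qed
  have finI: "finite I" unfolding I_def by simp
  have "card (cr A (cycle_edges cs \<inter> EK)) \<le> card (f ` I)"
    by (rule card_mono[OF finite_imageI[OF finI]]) fact
  also have "\<dots> \<le> card I" by (rule card_image_le[OF finI])
  finally have "3 \<le> card I" using big by linarith
  define I1 where "I1 = {i \<in> I. cs ! i \<in> A}"
  define I2 where "I2 = {i \<in> I. cs ! i \<notin> A}"
  have "I = I1 \<union> I2" "I1 \<inter> I2 = {}" unfolding I1_def I2_def by auto
  then have "card I = card I1 + card I2"
    using finI by (metis card_Un_disjoint finite_Un)
  then have "2 \<le> card I1 \<or> 2 \<le> card I2" using \<open>3 \<le> card I\<close> by linarith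
  then obtain i j where ij: "i < j" "i \<in> I" "j \<in> I" "cs ! i \<in> A \<longleftrightarrow> cs ! j \<in> A"
  proof
    assume "2 \<le> card I1"
    moreover have "finite I1" using finI unfolding I1_def by simp
    ultimately obtain x y where "x \<in> I1" "y \<in> I1" "x \<noteq> y"
      using card_le_Suc0_iff_eq[of I1] by fastforce
    then show ?thesis using that[of "min x y" "max x y"] unfolding I1_def
      by (cases "x < y") (auto simp: min_def max_def)
  next
    assume "2 \<le> card I2"
    moreover have "finite I2" using finI unfolding I2_def by simp
    ultimately obtain x y where "x \<in> I2" "y \<in> I2" "x \<noteq> y"
      using card_le_Suc0_iff_eq[of I2] by fastforce
    then show ?thesis using that[of "min x y" "max x y"] unfolding I2_def
      by (cases "x < y") (auto simp: min_def max_def)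
  qed
  have jn: "j < n" "i < n" using ij unfolding I_def by auto
  have ei: "f i \<in> EK" "cs ! i \<in> A \<longleftrightarrow> cs ! ((i + 1) mod n) \<notin> A" using ij unfolding I_def by auto
  have ej: "f j \<in> EK" "cs ! j \<in> A \<longleftrightarrow> cs ! ((j + 1) mod n) \<notin> A" using ij unfolding I_def by auto
  define cs0 where "cs0 = rotate i cs"
  define m where "m = j - i"
  have l0: "length cs0 = n" unfolding cs0_def n_def by simp
  have nth0: "cs0 ! k = cs ! ((i + k) mod n)" if "k < n" for k
    using that unfolding cs0_def n_def by (simp add: nth_rotate)
  have m1: "m + 1 < n"
  proof (rule ccontr)
    assume "\<not> m + 1 < n"
    then have "i = 0" "j = n - 1" using jn ij unfolding m_def by auto
    then have "(j + 1) mod n = i" using jn by auto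
    then show False using ej(2) ij(4) by auto
  qed
  have m0: "0 < m" using ij unfolding m_def by auto
  define a where "a = cs0 ! 0"
  define S where "S = take m (tl cs0)"
  define Q where "Q = drop (m + 1) cs0"
  have ne: "cs0 \<noteq> []" using l0 m1 by auto
  have split: "cs0 = a # S @ Q"
  proof -
    have "cs0 = hd cs0 # tl cs0" using ne by simp
    also have "tl cs0 = take m (tl cs0) @ drop m (tl cs0)" by simp
    also have "drop m (tl cs0) = Q" unfolding Q_def by (simp add: drop_Suc[symmetric] drop_tl)
    finally show ?thesis unfolding S_def a_def using ne by (simp add: hd_conv_nth)
  qed
  have lS: "length S = m" unfolding S_def using l0 m1 by simp
  have Sne: "S \<noteq> []" using lS m0 by auto
  have Qne: "Q \<noteq> []" unfolding Q_def using l0 m1 by simp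
  obtain x0 xs0 where c0: "cs0 = x0 # xs0" using ne by (cases cs0) auto
  have lx: "length xs0 = n - 1" using l0 c0 by auto
  have hdS: "hd S = cs0 ! 1"
  proof -
    have "S = take m xs0" unfolding S_def c0 by simp
    then have "hd S = take m xs0 ! 0" using Sne by (simp add: hd_conv_nth)
    also have "\<dots> = xs0 ! 0" using m0 by simp
    finally show ?thesis using c0 by simp
  qed
  have lastS: "last S = cs0 ! m"
  proof -
    have "S = take m xs0" unfolding S_def c0 by simp
    then have "last S = take m xs0 ! (m - 1)" using Sne lS by (simp add: last_conv_nth)
    also have "\<dots> = xs0 ! (m - 1)" using m0 by simp
    also have "\<dots> = cs0 ! m" using c0 m0 by (cases m) auto
    finally show ?thesis .
  qed
  have hdQ: "hd Q = cs0 ! (m + 1)" unfolding Q_def using l0 m1 by (simp add: hd_drop_conv_nth)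
  have va: "a = cs ! i" unfolding a_def using nth0[of 0] jn by simp
  have vb: "hd S = cs ! ((i + 1) mod n)" unfolding hdS using nth0[of 1] m1 by simp
  have vc: "last S = cs ! j" unfolding lastS using nth0[of m] m1 jn ij unfolding m_def by simp
  have vd: "hd Q = cs ! ((j + 1) mod n)" unfolding hdQ using nth0[of "m+1"] m1 ij unfolding m_def
    by (simp add: add.commute)
  have "cycle_edges (a # S @ Q) = cycle_edges cs" using split cycle_edges_rotate unfolding cs0_def by metis
  moreover have "set (a # S @ Q) = set cs" "length (a # S @ Q) = length cs" "distinct (a # S @ Q)"
    using split dcs unfolding cs0_def by (metis set_rotate, metis length_rotate, metis distinct_rotate)
  moreover have "{a, hd S} \<in> EK" "{last S, hd Q} \<in> EK" using ei(1) ej(1) va vb vc vd f_def by auto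
  moreover have "(a \<in> A \<and> last S \<in> A \<and> hd S \<notin> A \<and> hd Q \<notin> A) \<or>
      (a \<notin> A \<and> last S \<notin> A \<and> hd S \<in> A \<and> hd Q \<in> A)"
  proof -
    have "(cs ! i \<in> A \<and> cs ! j \<in> A \<and> cs ! ((i + 1) mod n) \<notin> A \<and> cs ! ((j + 1) mod n) \<notin> A) \<or>
      (cs ! i \<notin> A \<and> cs ! j \<notin> A \<and> cs ! ((i + 1) mod n) \<in> A \<and> cs ! ((j + 1) mod n) \<in> A)"
      using ei(2) ej(2) ij(4) by (cases "cs ! i \<in> A") simp_all
    then show ?thesis unfolding va vb vc vd .
  qed
  ultimately show ?thesis using Sne Qne by blast
qed


lemma rt_funpow_in: "rooted_tree N r par \<Longrightarrow> t \<in> N \<Longrightarrow> (par ^^ k) t \<in> N"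
  by (induction k) (auto simp: rooted_tree_def)

lemma desc_trans:
  "s \<in> descendants N par t \<Longrightarrow> t \<in> descendants N par t' \<Longrightarrow> s \<in> descendants N par t'"
proof -
  assume a1: "s \<in> descendants N par t" and a2: "t \<in> descendants N par t'"
  obtain a where a: "(par ^^ a) s = t" "s \<in> N" using a1 unfolding descendants_def by blast
  obtain b where b: "(par ^^ b) t = t'" using a2 unfolding descendants_def by blast
  have "(par ^^ (b + a)) s = t'" using a b by (simp add: funpow_add)
  then show ?thesis using a(2) unfolding descendants_def by blast
qed

lemma walk_cross:
  assumes "walk E xs" "xs \<noteq> []" "hd xs \<in> D" "last xs \<notin> D"
  shows "\<exists>i. Suc i < length xs \<and> xs ! i \<in> D \<and> xs ! Suc i \<notin> D \<and> {xs ! i, xs ! Suc i} \<in> E"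
  using assms
proof (induction xs)
  case (Cons x xs)
  show ?case
  proof (cases "xs = []")
    case True then show ?thesis using Cons by simp
  next
    case False
    have w: "walk E xs" using Cons(2) unfolding walk_def by (metis Suc_less_eq length_Cons nth_Cons_Suc)
    have e0: "{x, hd xs} \<in> E" using Cons(2) False unfolding walk_def
      by (metis Suc_less_eq hd_conv_nth length_Cons length_greater_0_conv nth_Cons_0 nth_Cons_Suc zero_less_Suc)
    show ?thesis
    proof (cases "hd xs \<in> D")
      case True
      then obtain i where "Suc i < length xs" "xs ! i \<in> D" "xs ! Suc i \<notin> D" "{xs ! i, xs ! Suc i} \<in> E"
        using Cons.IH[OF w False] Cons(5) False by auto
      then show ?thesis by (intro exI[of _ "Suc i"]) auto
    next
      case False
      then show ?thesis using Cons(4) e0 \<open>xs \<noteq> []\<close>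
        by (intro exI[of _ 0]) (auto simp: hd_conv_nth)
    qed
  qed
qed simp

lemma tree_edge_cross:
  assumes rt: "rooted_tree N r par"
    and e: "{p, q} \<in> tree_edges N r par"
    and p: "p \<in> descendants N par t" and q: "q \<notin> descendants N par t"
  shows "p = t"
proof -
  obtain v where v: "{p, q} = {v, par v}" "v \<in> N" "v \<noteq> r" using e unfolding tree_edges_def by blast
  have pv: "par v \<in> N" using rt v(2) unfolding rooted_tree_def by blast
  from v(1) have "(p = v \<and> q = par v) \<or> (p = par v \<and> q = v)" by (auto simp: doubleton_eq_iff)
  then show ?thesis
  proof
    assume h: "p = v \<and> q = par v"
    then obtain k where k: "(par ^^ k) v = t" using p unfolding descendants_def by blast
    show ?thesis
    proof (cases k)
      case 0 then show ?thesis using k h by simp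
    next
      case (Suc k')
      then have "(par ^^ k') (par v) = t" using k by (simp add: funpow_Suc_right del: funpow.simps)
      then have "q \<in> descendants N par t" using h pv unfolding descendants_def by blast
      then show ?thesis using q by simp
    qed
  next
    assume h: "p = par v \<and> q = v"
    then obtain k where k: "(par ^^ k) (par v) = t" using p unfolding descendants_def by blast
    then have "(par ^^ Suc k) v = t" by (simp add: funpow_Suc_right del: funpow.simps)
    then have "q \<in> descendants N par t" using h v(2) unfolding descendants_def by blast
    then show ?thesis using q by simp
  qed
qed

lemma gamma_nodes:
  assumes td: "tree_decomposition V E N r par bag"
    and xV: "x \<in> V" and g: "x \<in> gamma N par bag t" and nb: "x \<notin> bag t"
    and u: "u \<in> N" "x \<in> bag u"
  shows "u \<in> descendants N par t"
proof (rule ccontr)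
  assume nu: "u \<notin> descendants N par t"
  have rt: "rooted_tree N r par" using td unfolding tree_decomposition_def by blast
  obtain u0 where u0: "u0 \<in> descendants N par t" "x \<in> bag u0" using g unfolding gamma_def by blast
  have u0N: "u0 \<in> N" using u0 unfolding descendants_def by blast
  have "connected_in (tree_edges N r par) {t \<in> N. x \<in> bag t}"
    using td xV unfolding tree_decomposition_def by blast
  then obtain xs where xs: "xs \<noteq> []" "hd xs = u0" "last xs = u" "set xs \<subseteq> {t \<in> N. x \<in> bag t}"
      "walk (tree_edges N r par) xs"
    using u u0 u0N unfolding connected_in_def by blast
  then obtain i where i: "Suc i < length xs" "xs ! i \<in> descendants N par t"
      "xs ! Suc i \<notin> descendants N par t" "{xs ! i, xs ! Suc i} \<in> tree_edges N r par"
    using walk_cross[OF xs(5) xs(1), of "descendants N par t"] u0 nu by auto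
  have "xs ! i = t" using tree_edge_cross[OF rt i(4) i(2) i(3)] .
  moreover have "xs ! i \<in> set xs" using i(1) by simp
  ultimately show False using xs(4) nb by auto
qed

lemma funpow_fix: "par r = r \<Longrightarrow> (par ^^ n) r = r"
  by (induction n) auto

lemma desc_antisym:
  assumes rt: "rooted_tree N r par" and t: "t \<in> descendants N par t'" and t': "t' \<in> descendants N par t"
  shows "t = t'"
proof -
  obtain a where a: "(par ^^ a) t = t'" using t unfolding descendants_def by blast
  obtain b where b: "(par ^^ b) t' = t" using t' unfolding descendants_def by blast
  have tN: "t \<in> N" using t unfolding descendants_def by blast
  show ?thesis
  proof (cases "a = 0")
    case True then show ?thesis using a by simp
  next
    case False
    define p where "p = b + a"
    have pp: "(par ^^ p) t = t" unfolding p_def using a b by (simp add: funpow_add)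
    have pq: "(par ^^ (p * q)) t = t" for q
    proof (induction q)
      case (Suc q)
      have "p * Suc q = p + p * q" by simp
      then have "(par ^^ (p * Suc q)) t = (par ^^ p) ((par ^^ (p * q)) t)" by (metis funpow_add o_apply)
      then show ?case using Suc pp by simp
    qed simp
    obtain K where K: "(par ^^ K) t = r" using rt tN unfolding rooted_tree_def by blast
    have pr: "par r = r" using rt unfolding rooted_tree_def by blast
    have "p * K \<ge> K" using False unfolding p_def by simp
    then have "p * K = (p * K - K) + K" by simp
    then have "(par ^^ (p * K)) t = (par ^^ (p * K - K)) ((par ^^ K) t)"
      by (metis funpow_add o_apply)
    moreover have "(par ^^ (p * K - K)) r = r" using funpow_fix[of par r, OF pr] .
    ultimately have "t = r" using pq[of K] K by simp
    moreover have "(par ^^ a) r = r" using funpow_fix[of par r, OF pr] .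
    ultimately have "t' = r" using a by simp
    then show ?thesis using \<open>t = r\<close> by simp
  qed
qed


lemma finite_adj: "finite (adj xs)"
  by (induction xs rule: adj.induct) auto

lemma finite_cycle_edges: "finite (cycle_edges cs)"
proof (cases "cs = []")
  case True then show ?thesis by (simp add: cycle_edges_def)
next
  case False then show ?thesis by (simp add: cycle_edges_adj finite_adj)
qed

lemma laminar_case:
  assumes td: "tree_decomposition V E N r par bag" and KV: "K \<subseteq> V"
    and ab: "a \<le> b" and a: "(par ^^ a) u = t" and b: "(par ^^ b) u = t'" and tN: "t \<in> N" and t'N: "t' \<in> N"
  shows "K \<inter> (gamma N par bag t - bag t) \<subseteq> K \<inter> (gamma N par bag t' - bag t')"
proof
  fix z assume z: "z \<in> K \<inter> (gamma N par bag t - bag t)"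
  have rt: "rooted_tree N r par" using td unfolding tree_decomposition_def by blast
  have "b = (b - a) + a" using ab by simp
  then have "(par ^^ b) u = (par ^^ (b - a)) ((par ^^ a) u)" by (metis funpow_add o_apply)
  then have "(par ^^ (b - a)) t = t'" using a b by simp
  then have tt': "t \<in> descendants N par t'" using tN unfolding descendants_def by blast
  obtain w where w: "w \<in> descendants N par t" "z \<in> bag w" using z unfolding gamma_def by blast
  have "w \<in> descendants N par t'" using desc_trans[OF w(1) tt'] .
  then have g: "z \<in> gamma N par bag t'" using w(2) unfolding gamma_def by blast
  have "z \<notin> bag t'"
  proof
    assume "z \<in> bag t'"
    moreover have "z \<in> V" "z \<in> gamma N par bag t" "z \<notin> bag t" using z KV by blast+
    ultimately have "t' \<in> descendants N par t" using gamma_nodes[OF td, of z t t'] t'N by blast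
    then have "t = t'" using desc_antisym[OF rt tt'] by simp
    then show False using z \<open>z \<in> bag t'\<close> by simp
  qed
  then show "z \<in> K \<inter> (gamma N par bag t' - bag t')" using z g by blast
qed

lemma laminar:
  assumes td: "tree_decomposition V E N r par bag" and KV: "K \<subseteq> V" and tN: "t \<in> N" and t'N: "t' \<in> N"
  defines "A1 \<equiv> K \<inter> (gamma N par bag t - bag t)" and "A2 \<equiv> K \<inter> (gamma N par bag t' - bag t')"
  shows "A1 \<subseteq> A2 \<or> A2 \<subseteq> A1 \<or> A1 \<inter> A2 = {}"
proof (cases "A1 \<inter> A2 = {}")
  case False
  then obtain x where x: "x \<in> A1" "x \<in> A2" by blast
  obtain u where u: "u \<in> descendants N par t" "x \<in> bag u" using x(1) unfolding A1_def gamma_def by blast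
  have uN: "u \<in> N" using u unfolding descendants_def by blast
  have "x \<in> V" "x \<in> gamma N par bag t'" "x \<notin> bag t'" using x(2) KV unfolding A2_def by blast+
  then have "u \<in> descendants N par t'" using gamma_nodes[OF td, of x t' u] uN u(2) by blast
  then obtain b where b: "(par ^^ b) u = t'" unfolding descendants_def by blast
  obtain a where a: "(par ^^ a) u = t" using u unfolding descendants_def by blast
  show ?thesis
  proof (cases "a \<le> b")
    case True then show ?thesis using laminar_case[OF td KV True a b tN t'N] unfolding A1_def A2_def by blast
  next
    case False then have "b \<le> a" by simp
    then show ?thesis using laminar_case[OF td KV _ b a t'N tN] unfolding A1_def A2_def by blast
  qed
qed simp


theorem lemma26:
  fixes W U :: "'v set" and EB :: "'v set set"
    and N :: "'n set" and r :: 'n and par :: "'n \<Rightarrow> 'n" and bag :: "'n \<Rightarrow> 'v set"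
    and k :: nat and C :: "'v list" and s :: 'v
  assumes bip: "bipartite_graph W U EB"
    and planar: "planar_graph (W \<union> U) EB"
    and k_pos: "k > 0"
    and nice: "nice_tree_decomposition (W \<union> U) EB N r par bag"
    and width: "td_width N bag < 5 * sqrt (2 * real k)"
    and cyc: "is_cycle W (half_square_edges W EB) C"
    and s_special: "s \<in> U"
  shows "\<exists>C'. is_cycle W (half_square_edges W EB) C' \<and>
           cycle_length C' = cycle_length C \<and>
           cycle_edges C' - edges_within (half_square_edges W EB) (nbhd EB s) =
             cycle_edges C - edges_within (half_square_edges W EB) (nbhd EB s) \<and>
           (\<forall>t \<in> N.
              card {e \<in> cycle_edges C' \<inter> edges_within (half_square_edges W EB) (nbhd EB s).
                      \<exists>x y. e = {x, y} \<and> x \<in> Fake W U EB N par bag t \<inter> nbhd EB s \<and>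
                            y \<in> W - gamma N par (derived_bag W U EB N par bag) t} \<le> 4)"
proof -
  define K where "K = nbhd EB s"
  define EG where "EG = half_square_edges W EB"
  define EK where "EK = edges_within EG K"
  have td: "tree_decomposition (W \<union> U) EB N r par bag"
    using nice unfolding nice_tree_decomposition_def by blast
  have rt: "rooted_tree N r par" using td unfolding tree_decomposition_def by blast
  have finN: "finite N" using rt unfolding rooted_tree_def by blast
  have disj: "W \<inter> U = {}" and EBsub: "EB \<subseteq> {{w, u} | w u. w \<in> W \<and> u \<in> U}"
    using bip unfolding bipartite_graph_def by auto
  have KW: "K \<subseteq> W"
  proof
    fix y assume "y \<in> K"
    then have "{s, y} \<in> EB" unfolding K_def nbhd_def by simp
    then obtain w u where wu: "{s, y} = {w, u}" "w \<in> W" "u \<in> U" using EBsub by blast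
    then have "s \<noteq> w" using s_special disj by blast
    then show "y \<in> W" using wu by (auto simp: doubleton_eq_iff)
  qed
  have clique: "\<forall>x\<in>K. \<forall>y\<in>K. x \<noteq> y \<longrightarrow> {x, y} \<in> EG"
  proof (intro ballI impI)
    fix x y assume xy: "x \<in> K" "y \<in> K" "x \<noteq> y"
    have nE: "{x, y} \<notin> EB"
    proof
      assume "{x, y} \<in> EB"
      then obtain w u where wu: "{x, y} = {w, u}" "w \<in> W" "u \<in> U" using EBsub by blast
      then have "u \<in> W" using KW xy by (auto simp: doubleton_eq_iff)
      then show False using wu disj by blast
    qed
    have "{x, s} \<in> EB" "{s, y} \<in> EB" using xy unfolding K_def nbhd_def by (auto simp: insert_commute)
    then show "{x, y} \<in> EG" unfolding EG_def half_square_edges_def using xy KW nE by blast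
  qed
  define Af where "Af t = K \<inter> (gamma N par bag t - bag t)" for t
  define F where "F = Af ` N"
  have finF: "finite F" unfolding F_def using finN by simp
  have KV: "K \<subseteq> W \<union> U" using KW by blast
  have lam: "\<forall>A\<in>F. \<forall>A'\<in>F. A' \<subseteq> A \<or> A \<subseteq> A' \<or> A' \<inter> A = {}"
    unfolding F_def Af_def using laminar[OF td KV] by blast
  define Valid where "Valid cs \<longleftrightarrow> is_cycle W EG cs \<and> length cs = length C \<and>
      cycle_edges cs - EK = cycle_edges C - EK" for cs
  define Phi where "Phi cs = (\<Sum>A\<in>F. card (cr A (cycle_edges cs \<inter> EK)))" for cs
  have "Valid C" unfolding Valid_def EG_def using cyc by simp
  then obtain C' where C': "Valid C'" and minC: "\<forall>cs. Valid cs \<longrightarrow> Phi C' \<le> Phi cs"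
    using ex_has_least_nat[of Valid C Phi] by blast
  have small: "card (cr A (cycle_edges C' \<inter> EK)) \<le> 2" if AF: "A \<in> F" for A
  proof (rule ccontr)
    assume "\<not> ?thesis"
    then have big: "3 \<le> card (cr A (cycle_edges C' \<inter> EK))" by simp
    have cC': "is_cycle W EG C'" using C' unfolding Valid_def by blast
    then have dC: "distinct C'" "3 \<le> length C'" "set C' \<subseteq> W" "cycle_edges C' \<subseteq> EG"
      unfolding is_cycle_alt by auto
    obtain a S Q where sp: "cycle_edges (a # S @ Q) = cycle_edges C'" "set (a # S @ Q) = set C'"
      "length (a # S @ Q) = length C'" "distinct (a # S @ Q)" "S \<noteq> []" "Q \<noteq> []"
      "(a \<in> A \<and> last S \<in> A \<and> hd S \<notin> A \<and> hd Q \<notin> A) \<or> (a \<notin> A \<and> last S \<notin> A \<and> hd S \<in> A \<and> hd Q \<in> A)"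
      "{a, hd S} \<in> EK" "{last S, hd Q} \<in> EK"
      using find_split[OF dC(1,2) big] by blast
    have lamA: "\<forall>A'\<in>F. A' \<subseteq> A \<or> A \<subseteq> A' \<or> A' \<inter> A = {}" using lam AF by blast
    note st = two_opt_step[OF sp(4,5,6,7) sp(8,9)[unfolded EK_def] clique finF AF lamA]
    define cs where "cs = a # rev S @ Q"
    have "Valid cs"
    proof -
      have "3 \<le> length cs" "set cs = set C'" "distinct cs" "length cs = length C'"
        using sp(2,3,4) dC(2) unfolding cs_def by auto
      moreover have "cycle_edges cs \<subseteq> EG"
        using st(2) sp(1) dC(4) unfolding cs_def EK_def edges_within_def by blast
      moreover have "cycle_edges cs - EK = cycle_edges C - EK"
        using st(1) sp(1) C' unfolding cs_def EK_def Valid_def by simp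
      ultimately show ?thesis using C' dC(3) unfolding Valid_def is_cycle_alt by simp
    qed
    moreover have "Phi cs < Phi C'" using st(3) sp(1) unfolding Phi_def cs_def EK_def by simp
    ultimately show False using minC by fastforce
  qed
  show ?thesis
  proof (intro exI conjI)
    show "is_cycle W (half_square_edges W EB) C'" using C' unfolding Valid_def EG_def by blast
    show "cycle_length C' = cycle_length C" using C' unfolding Valid_def cycle_length_def by blast
    show "cycle_edges C' - edges_within (half_square_edges W EB) (nbhd EB s) =
             cycle_edges C - edges_within (half_square_edges W EB) (nbhd EB s)"
      using C' unfolding Valid_def EK_def EG_def K_def by blast
    show "\<forall>t \<in> N.
              card {e \<in> cycle_edges C' \<inter> edges_within (half_square_edges W EB) (nbhd EB s).
                      \<exists>x y. e = {x, y} \<and> x \<in> Fake W U EB N par bag t \<inter> nbhd EB s \<and>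
                            y \<in> W - gamma N par (derived_bag W U EB N par bag) t} \<le> 4"
    proof
      fix t assume tN: "t \<in> N"
      have sub: "{e \<in> cycle_edges C' \<inter> edges_within (half_square_edges W EB) (nbhd EB s).
                      \<exists>x y. e = {x, y} \<and> x \<in> Fake W U EB N par bag t \<inter> nbhd EB s \<and>
                            y \<in> W - gamma N par (derived_bag W U EB N par bag) t}
            \<subseteq> cr (Af t) (cycle_edges C' \<inter> EK)"
      proof
        fix e assume "e \<in> {e \<in> cycle_edges C' \<inter> edges_within (half_square_edges W EB) (nbhd EB s).
                      \<exists>x y. e = {x, y} \<and> x \<in> Fake W U EB N par bag t \<inter> nbhd EB s \<and>
                            y \<in> W - gamma N par (derived_bag W U EB N par bag) t}"
        note H = this
        have e0: "e \<in> cycle_edges C' \<inter> EK" using H unfolding EK_def EG_def K_def by simp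
        from H have "\<exists>x y. e = {x, y} \<and> x \<in> Fake W U EB N par bag t \<inter> nbhd EB s \<and>
                            y \<in> W - gamma N par (derived_bag W U EB N par bag) t" by simp
        then obtain x y where e': "e = {x, y}" "x \<in> Fake W U EB N par bag t \<inter> nbhd EB s"
            "y \<in> W - gamma N par (derived_bag W U EB N par bag) t" by blast
        have e: "e = {x, y}" "x \<in> Fake W U EB N par bag t" "x \<in> K"
            "y \<in> W" "y \<notin> gamma N par (derived_bag W U EB N par bag) t"
          using e' unfolding K_def by simp_all
        have x1: "x \<in> derived_bag W U EB N par bag t" "x \<notin> bag t" using e(2) unfolding Fake_def by simp_all
        then have "x \<in> (\<Union>s'\<in>bag t \<inter> U. nbhd EB s' \<inter> gamma N par bag t)"
          unfolding derived_bag_def by blast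
        then have xg: "x \<in> gamma N par bag t" "x \<notin> bag t" using x1(2) by blast+
        have yg: "y \<notin> gamma N par bag t"
        proof
          assume "y \<in> gamma N par bag t"
          then obtain t' where t': "t' \<in> descendants N par t" "y \<in> bag t'" unfolding gamma_def by blast
          then have "y \<in> derived_bag W U EB N par bag t'" using e(4) unfolding derived_bag_def by blast
          then have "y \<in> gamma N par (derived_bag W U EB N par bag) t" using t'(1) unfolding gamma_def by blast
          then show False using e(5) by simp
        qed
        show "e \<in> cr (Af t) (cycle_edges C' \<inter> EK)"
          unfolding cr_def Af_def using e0 e xg yg by blast
      qed
      have "Af t \<in> F" unfolding F_def using tN by blast
      then have "card (cr (Af t) (cycle_edges C' \<inter> EK)) \<le> 2" by (rule small)
      moreover have "finite (cr (Af t) (cycle_edges C' \<inter> EK))"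
        unfolding cr_def by (rule finite_subset[OF _ finite_cycle_edges[of C']]) auto
      ultimately show "card {e \<in> cycle_edges C' \<inter> edges_within (half_square_edges W EB) (nbhd EB s).
                      \<exists>x y. e = {x, y} \<and> x \<in> Fake W U EB N par bag t \<inter> nbhd EB s \<and>
                            y \<in> W - gamma N par (derived_bag W U EB N par bag) t} \<le> 4"
        using card_mono[OF \<open>finite (cr (Af t) (cycle_edges C' \<inter> EK))\<close> sub] by linarith
    qed
  qed
qed

end
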